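(* Fix $d\ge 0$ and let $n\ge 2d^2+2d$. If $p\in\mathcal H(n,d)$, then $N(p)\ge (n-1)d+1$. Furthermore, if $N(p)=(n-1)d+1$, then $p\in\mathcal W$.
   Context: Write $s(x)=\sum_{j=1}^n x_j$. $\mathcal H(n,d)$ is the set of real polynomials in $x_1,\dots,x_n$ of total degree exactly $d$, with all coefficients nonnegative, such that $p(x)=1$ whenever $s(x)=1$. $N(p)$ denotes the number of distinct monomials occurring with nonzero coefficient in $p$. $\mathcal W$ is the set of polynomials obtainable from the constant polynomial $1$ by finitely many applications of operations of the form $g\mapsto g-u+s\,u$, where at each step $u$ is a polynomial such that both $u$ and $g-u$ have nonnegative coefficients. *)

theory Defs
  imports Complex_Main "HOL-Library.Poly_Mapping"
begin

(* Real polynomials in the variables x_0,...,x_{n-1} (standing for x_1..x_n):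
   a finitely supported map from exponent vectors (monomials) to coefficients. *)
type_synonym mpoly = "(nat \<Rightarrow>\<^sub>0 nat) \<Rightarrow>\<^sub>0 real"

definition in_vars :: "nat \<Rightarrow> mpoly \<Rightarrow> bool" where
  "in_vars n p \<longleftrightarrow> (\<forall>\<alpha>\<in>Poly_Mapping.keys p. Poly_Mapping.keys \<alpha> \<subseteq> {..<n})"

definition mon_deg :: "(nat \<Rightarrow>\<^sub>0 nat) \<Rightarrow> nat" where
  "mon_deg \<alpha> = (\<Sum>i\<in>Poly_Mapping.keys \<alpha>. Poly_Mapping.lookup \<alpha> i)"

(* total degree of a nonzero polynomial *)
definition tdeg :: "mpoly \<Rightarrow> nat" where
  "tdeg p = Max (mon_deg ` Poly_Mapping.keys p)"

definition eval :: "mpoly \<Rightarrow> (nat \<Rightarrow> real) \<Rightarrow> real" where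
  "eval p x = (\<Sum>\<alpha>\<in>Poly_Mapping.keys p. Poly_Mapping.lookup p \<alpha> * (\<Prod>i\<in>Poly_Mapping.keys \<alpha>. x i ^ Poly_Mapping.lookup \<alpha> i))"

definition nonneg_coeffs :: "mpoly \<Rightarrow> bool" where
  "nonneg_coeffs p \<longleftrightarrow> (\<forall>\<alpha>. Poly_Mapping.lookup p \<alpha> \<ge> 0)"

definition var :: "nat \<Rightarrow> mpoly" where
  "var j = Poly_Mapping.single (Poly_Mapping.single j 1) 1"

definition svar :: "nat \<Rightarrow> mpoly" where
  "svar n = (\<Sum>j<n. var j)"

definition H :: "nat \<Rightarrow> nat \<Rightarrow> mpoly set" where
  "H n d = {p. in_vars n p \<and> p \<noteq> 0 \<and> tdeg p = d \<and> nonneg_coeffs p \<and>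
              (\<forall>x. (\<Sum>j<n. x j) = 1 \<longrightarrow> eval p x = 1)}"

definition N :: "mpoly \<Rightarrow> nat" where
  "N p = card (Poly_Mapping.keys p)"

inductive_set W :: "nat \<Rightarrow> mpoly set" for n :: nat where
  one: "1 \<in> W n"
| step: "g \<in> W n \<Longrightarrow> nonneg_coeffs u \<Longrightarrow> nonneg_coeffs (g - u) \<Longrightarrow>
         g - u + svar n * u \<in> W n"

end

theory Submission
  imports Defs "HOL-Computational_Algebra.Polynomial"
begin

definition mmono :: "(nat \<Rightarrow>\<^sub>0 nat) \<Rightarrow> (nat \<Rightarrow> real) \<Rightarrow> real" where
  "mmono \<beta> x = (\<Prod>i\<in>Poly_Mapping.keys \<beta>. x i ^ Poly_Mapping.lookup \<beta> i)"

lemma eval_mono: "eval p x = (\<Sum>\<alpha>\<in>Poly_Mapping.keys p. Poly_Mapping.lookup p \<alpha> * mmono \<alpha> x)"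
  by (simp add: eval_def mmono_def)

lemma mono_superset:
  assumes "finite F" "Poly_Mapping.keys \<beta> \<subseteq> F"
  shows "mmono \<beta> x = (\<Prod>i\<in>F. x i ^ Poly_Mapping.lookup \<beta> i)"
  unfolding mmono_def
  by (rule prod.mono_neutral_left) (use assms in \<open>auto simp: in_keys_iff\<close>)

lemma mono_zero [simp]: "mmono 0 x = 1"
  by (simp add: mmono_def)

lemma mono_add: "mmono (\<beta> + \<gamma>) x = mmono \<beta> x * mmono \<gamma> x"
proof -
  let ?F = "Poly_Mapping.keys \<beta> \<union> Poly_Mapping.keys \<gamma>"
  have "mmono (\<beta> + \<gamma>) x = (\<Prod>i\<in>?F. x i ^ Poly_Mapping.lookup (\<beta>+\<gamma>) i)"
    by (rule mono_superset) (auto dest: keys_add[THEN subsetD])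
  also have "\<dots> = (\<Prod>i\<in>?F. x i ^ Poly_Mapping.lookup \<beta> i * x i ^ Poly_Mapping.lookup \<gamma> i)"
    by (simp add: lookup_add power_add)
  also have "\<dots> = mmono \<beta> x * mmono \<gamma> x"
    by (simp add: prod.distrib mono_superset[of ?F])
  finally show ?thesis .
qed

lemma eval_superset:
  assumes "finite F" "Poly_Mapping.keys p \<subseteq> F"
  shows "eval p x = (\<Sum>\<alpha>\<in>F. Poly_Mapping.lookup p \<alpha> * mmono \<alpha> x)"
  unfolding eval_mono
  by (rule sum.mono_neutral_left) (use assms in \<open>auto simp: in_keys_iff\<close>)

lemma eval_add: "eval (p + q) x = eval p x + eval q x"
proof -
  let ?F = "Poly_Mapping.keys p \<union> Poly_Mapping.keys q"
  have "eval (p + q) x = (\<Sum>\<alpha>\<in>?F. Poly_Mapping.lookup (p+q) \<alpha> * mmono \<alpha> x)"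
    by (rule eval_superset) (auto dest: keys_add[THEN subsetD])
  also have "\<dots> = eval p x + eval q x"
    by (simp add: lookup_add distrib_right sum.distrib eval_superset[of ?F])
  finally show ?thesis .
qed

lemma eval_diff: "eval (p - q) x = eval p x - eval q x"
proof -
  let ?F = "Poly_Mapping.keys p \<union> Poly_Mapping.keys q"
  have "eval (p - q) x = (\<Sum>\<alpha>\<in>?F. Poly_Mapping.lookup (p-q) \<alpha> * mmono \<alpha> x)"
    by (rule eval_superset) (auto simp: in_keys_iff lookup_minus)
  also have "\<dots> = eval p x - eval q x"
    by (simp add: lookup_minus left_diff_distrib sum_subtractf eval_superset[of ?F])
  finally show ?thesis .
qed

lemma eval_one [simp]: "eval 1 x = 1"
  by (simp add: eval_mono)

lemma eval_zero [simp]: "eval 0 x = 0"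
  by (simp add: eval_mono)

lemma eval_sum: "finite I \<Longrightarrow> eval (\<Sum>i\<in>I. f i) x = (\<Sum>i\<in>I. eval (f i) x)"
  by (induction rule: finite_induct) (auto simp: eval_add)

lemma le_pm_iff: fixes \<gamma> \<beta> :: "nat \<Rightarrow>\<^sub>0 nat" shows "(\<forall>i. Poly_Mapping.lookup \<gamma> i \<le> Poly_Mapping.lookup \<beta> i) \<longleftrightarrow> (\<exists>q. \<beta> = \<gamma> + q)"
proof
  assume H: "\<forall>i. Poly_Mapping.lookup \<gamma> i \<le> Poly_Mapping.lookup \<beta> i"
  have "\<beta> = \<gamma> + (\<beta> - \<gamma>)"
    by (rule poly_mapping_eqI) (use H in \<open>auto simp: lookup_add lookup_minus\<close>)
  then show "\<exists>q. \<beta> = \<gamma> + q" by blast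
qed (auto simp: lookup_add)

lemma lookup_single_mult:
  fixes g :: mpoly
  shows "Poly_Mapping.lookup (Poly_Mapping.single \<gamma> c * g) \<beta> =
    (if (\<forall>i. Poly_Mapping.lookup \<gamma> i \<le> Poly_Mapping.lookup \<beta> i) then c * Poly_Mapping.lookup g (\<beta> - \<gamma>) else 0)"
proof -
  have "Poly_Mapping.lookup (Poly_Mapping.single \<gamma> c * g) \<beta> =
     (\<Sum>l. (c when \<gamma> = l) * (\<Sum>q. Poly_Mapping.lookup g q when \<beta> = l + q))"
    by (simp add: lookup_mult lookup_single)
  also have "\<dots> = c * (\<Sum>q. Poly_Mapping.lookup g q when \<beta> = \<gamma> + q)"
    by (simp add: when_mult)
  also have "\<dots> = (if (\<forall>i. Poly_Mapping.lookup \<gamma> i \<le> Poly_Mapping.lookup \<beta> i) then c * Poly_Mapping.lookup g (\<beta> - \<gamma>) else 0)"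
  proof (cases "\<forall>i. Poly_Mapping.lookup \<gamma> i \<le> Poly_Mapping.lookup \<beta> i")
    case True
    have "\<And>q. (\<beta> = \<gamma> + q) \<longleftrightarrow> (\<beta> - \<gamma> = q)"
    proof
      fix q assume "\<beta> = \<gamma> + q" then show "\<beta> - \<gamma> = q"
        by (intro poly_mapping_eqI) (simp add: lookup_add lookup_minus)
    next
      fix q assume "\<beta> - \<gamma> = q" then show "\<beta> = \<gamma> + q"
        using True by (intro poly_mapping_eqI) (auto simp: lookup_add lookup_minus)
    qed
    then have "(\<Sum>q. Poly_Mapping.lookup g q when \<beta> = \<gamma> + q) = (\<Sum>q. Poly_Mapping.lookup g q when \<beta> - \<gamma> = q)"
      by presburger
    then show ?thesis using True by (simp only: Sum_any_when_equal') simp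
  next
    case False
    then have "\<And>q. \<not> (\<beta> = \<gamma> + q)" using le_pm_iff by blast
    then show ?thesis using False by (simp add: when_def del: not_all)
  qed
  finally show ?thesis .
qed

lemma eval_single_mult:
  fixes g :: mpoly
  shows "eval (Poly_Mapping.single \<gamma> c * g) x = c * mmono \<gamma> x * eval g x"
proof -
  let ?F = "(\<lambda>\<delta>. \<gamma> + \<delta>) ` Poly_Mapping.keys g"
  have sub: "Poly_Mapping.keys (Poly_Mapping.single \<gamma> c * g) \<subseteq> ?F"
  proof
    fix \<beta> assume "\<beta> \<in> Poly_Mapping.keys (Poly_Mapping.single \<gamma> c * g)"
    then have "Poly_Mapping.lookup (Poly_Mapping.single \<gamma> c * g) \<beta> \<noteq> 0" by (simp add: in_keys_iff)
    then have H: "(\<forall>i. Poly_Mapping.lookup \<gamma> i \<le> Poly_Mapping.lookup \<beta> i)" and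
      "Poly_Mapping.lookup g (\<beta> - \<gamma>) \<noteq> 0"
      by (auto simp: lookup_single_mult split: if_splits)
    moreover have "\<beta> = \<gamma> + (\<beta> - \<gamma>)"
      by (rule poly_mapping_eqI) (use H in \<open>auto simp: lookup_add lookup_minus\<close>)
    ultimately show "\<beta> \<in> ?F" by (auto simp: in_keys_iff)
  qed
  have inj: "inj_on (\<lambda>\<delta>. \<gamma> + \<delta>) (Poly_Mapping.keys g)"
    by (rule inj_onI) (metis add_left_imp_eq)
  have "eval (Poly_Mapping.single \<gamma> c * g) x =
     (\<Sum>\<beta>\<in>?F. Poly_Mapping.lookup (Poly_Mapping.single \<gamma> c * g) \<beta> * mmono \<beta> x)"
    by (rule eval_superset) (use sub in auto)
  also have "\<dots> = (\<Sum>\<delta>\<in>Poly_Mapping.keys g. Poly_Mapping.lookup (Poly_Mapping.single \<gamma> c * g) (\<gamma>+\<delta>) * mmono (\<gamma>+\<delta>) x)"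
    by (simp add: sum.reindex[OF inj])
  also have "\<dots> = (\<Sum>\<delta>\<in>Poly_Mapping.keys g. c * mmono \<gamma> x * (Poly_Mapping.lookup g \<delta> * mmono \<delta> x))"
    by (rule sum.cong) (auto simp: lookup_single_mult lookup_add mono_add)
  also have "\<dots> = c * mmono \<gamma> x * eval g x"
    by (simp add: eval_mono sum_distrib_left)
  finally show ?thesis .
qed



lemma digit_sum_less:
  fixes f :: "nat \<Rightarrow> nat"
  assumes "\<forall>i<L. f i < B"
  shows "(\<Sum>i<L. f i * B^i) < B^L"
  using assms
proof (induction L)
  case 0 then show ?case by simp
next
  case (Suc L)
  have IH: "(\<Sum>i<L. f i * B^i) < B^L" using Suc by auto
  have "f L + 1 \<le> B" using Suc.prems by auto
  then have "(f L + 1) * B^L \<le> B * B^L" by (rule mult_right_mono) simp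
  then show ?case using IH by (simp add: algebra_simps)
qed

lemma digit_inj:
  fixes f g :: "nat \<Rightarrow> nat"
  assumes "\<forall>i<L. f i < B" "\<forall>i<L. g i < B" "(\<Sum>i<L. f i * B^i) = (\<Sum>i<L. g i * B^i)"
  shows "\<forall>i<L. f i = g i"
  using assms
proof (induction L)
  case 0 then show ?case by simp
next
  case (Suc L)
  let ?Sf = "\<Sum>i<L. f i * B^i" and ?Sg = "\<Sum>i<L. g i * B^i"
  have lf: "?Sf < B^L" and lg: "?Sg < B^L" using Suc.prems by (auto intro!: digit_sum_less)
  have eq: "?Sf + f L * B^L = ?Sg + g L * B^L" using Suc.prems(3) by simp
  have nz: "B^L \<noteq> 0" using lf by (metis not_less0)
  have "(?Sf + f L * B^L) div B^L = f L" using lf nz by simp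
  moreover have "(?Sg + g L * B^L) div B^L = g L" using lg nz by simp
  ultimately have fL: "f L = g L" using eq by simp
  then have "?Sf = ?Sg" using eq by simp
  moreover have "\<forall>i<L. f i < B" "\<forall>i<L. g i < B" using Suc.prems by auto
  ultimately have IH: "\<forall>i<L. f i = g i" using Suc.IH by blast
  show ?case
  proof (intro allI impI)
    fix i assume "i < Suc L"
    then consider "i < L" | "i = L" by linarith
    then show "f i = g i" using IH fL by cases auto
  qed
qed

lemma identity_principle:
  fixes q :: mpoly
  assumes "\<forall>x. eval q x = 0"
  shows "q = 0"
proof (rule ccontr)
  assume "q \<noteq> 0"
  let ?K = "Poly_Mapping.keys q"
  have "finite (\<Union>\<beta>\<in>?K. Poly_Mapping.keys \<beta>)" by simp
  then obtain L where L0: "(\<Union>\<beta>\<in>?K. Poly_Mapping.keys \<beta>) \<subseteq> {..<L}"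
    using finite_nat_bounded by presburger
  have L: "\<And>i. i \<in> (\<Union>\<beta>\<in>?K. Poly_Mapping.keys \<beta>) \<Longrightarrow> i < L" using L0 by blast
  have "finite (\<Union>\<beta>\<in>?K. Poly_Mapping.lookup \<beta> ` Poly_Mapping.keys \<beta>)" by simp
  then obtain B1 where B1: "(\<Union>\<beta>\<in>?K. Poly_Mapping.lookup \<beta> ` Poly_Mapping.keys \<beta>) \<subseteq> {..<B1}"
    using finite_nat_bounded by presburger
  have B0: "\<And>v. v \<in> (\<Union>\<beta>\<in>?K. Poly_Mapping.lookup \<beta> ` Poly_Mapping.keys \<beta>) \<Longrightarrow> v < B1" using B1 by blast
  define B where "B = Suc B1"
  have B: "\<And>v. v \<in> (\<Union>\<beta>\<in>?K. Poly_Mapping.lookup \<beta> ` Poly_Mapping.keys \<beta>) \<Longrightarrow> v < B"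
    using B0 unfolding B_def using less_SucI by blast
  have Bpos: "0 < B" by (simp add: B_def)
  have Bb: "\<And>\<beta> i. \<beta> \<in> ?K \<Longrightarrow> Poly_Mapping.lookup \<beta> i < B"
  proof -
    fix \<beta> i assume "\<beta> \<in> ?K"
    show "Poly_Mapping.lookup \<beta> i < B"
    proof (cases "i \<in> Poly_Mapping.keys \<beta>")
      case True then show ?thesis using B \<open>\<beta> \<in> ?K\<close> by fastforce
    next
      case False then show ?thesis using Bpos by (simp add: in_keys_iff)
    qed
  qed
  define enc where "enc \<beta> = (\<Sum>i<L. Poly_Mapping.lookup \<beta> i * B^i)" for \<beta> :: "nat \<Rightarrow>\<^sub>0 nat"
  have encinj: "\<beta> = \<beta>'" if "\<beta> \<in> ?K" "\<beta>' \<in> ?K" "enc \<beta> = enc \<beta>'" for \<beta> \<beta>'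
  proof -
    have "\<forall>i<L. Poly_Mapping.lookup \<beta> i = Poly_Mapping.lookup \<beta>' i"
      by (rule digit_inj[of L _ B]) (use that Bb in \<open>auto simp: enc_def\<close>)
    moreover have "Poly_Mapping.lookup \<beta> i = Poly_Mapping.lookup \<beta>' i" if "\<not> i < L" for i
    proof -
      have "Poly_Mapping.lookup \<gamma> i = 0" if "\<gamma> \<in> ?K" for \<gamma>
        using L[of i] that \<open>\<not> i < L\<close> by (metis UN_I in_keys_iff)
      then show ?thesis using \<open>\<beta> \<in> ?K\<close> \<open>\<beta>' \<in> ?K\<close> by simp
    qed
    ultimately show ?thesis by (metis poly_mapping_eqI)
  qed
  define P where "P = (\<Sum>\<beta>\<in>?K. monom (Poly_Mapping.lookup q \<beta>) (enc \<beta>))"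
  have monox: "mmono \<beta> (\<lambda>i. t ^ (B^i)) = t ^ enc \<beta>" if "\<beta> \<in> ?K" for \<beta> t
  proof -
    have "mmono \<beta> (\<lambda>i. t ^ (B^i)) = (\<Prod>i<L. (t ^ (B^i)) ^ Poly_Mapping.lookup \<beta> i)"
      by (rule mono_superset) (use L that in auto)
    also have "\<dots> = (\<Prod>i<L. t ^ (Poly_Mapping.lookup \<beta> i * B^i))"
      by (simp add: power_mult[symmetric] mult.commute)
    also have "\<dots> = t ^ enc \<beta>" by (simp add: enc_def power_sum)
    finally show ?thesis .
  qed
  have "poly P t = 0" for t
  proof -
    have "poly P t = (\<Sum>\<beta>\<in>?K. Poly_Mapping.lookup q \<beta> * t ^ enc \<beta>)"
      by (simp add: P_def poly_sum poly_monom)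
    also have "\<dots> = eval q (\<lambda>i. t ^ (B^i))"
      by (simp add: eval_mono monox)
    finally show ?thesis using assms by simp
  qed
  then have "P = 0" using poly_all_0_iff_0 by blast
  obtain \<beta>0 where b0: "\<beta>0 \<in> ?K" using \<open>q \<noteq> 0\<close> by (metis keys_eq_empty all_not_in_conv)
  have "coeff P (enc \<beta>0) = (\<Sum>\<beta>\<in>?K. if enc \<beta> = enc \<beta>0 then Poly_Mapping.lookup q \<beta> else 0)"
    by (simp add: P_def coeff_sum)
  also have "\<dots> = (\<Sum>\<beta>\<in>{\<beta>0}. Poly_Mapping.lookup q \<beta>)"
    by (rule sum.mono_neutral_cong_right) (use b0 encinj in auto)
  finally have "coeff P (enc \<beta>0) = Poly_Mapping.lookup q \<beta>0" by simp
  then show False using \<open>P = 0\<close> b0 by (simp add: in_keys_iff)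
qed



abbreviation lk :: "('a \<Rightarrow>\<^sub>0 'b::zero) \<Rightarrow> 'a \<Rightarrow> 'b" where "lk \<equiv> Poly_Mapping.lookup"
abbreviation ks :: "('a \<Rightarrow>\<^sub>0 'b::zero) \<Rightarrow> 'a set" where "ks \<equiv> Poly_Mapping.keys"
abbreviation e1 :: "nat \<Rightarrow> (nat \<Rightarrow>\<^sub>0 nat)" where "e1 i \<equiv> Poly_Mapping.single i (Suc 0)"

definition sh :: "nat \<Rightarrow> mpoly \<Rightarrow> (nat \<Rightarrow>\<^sub>0 nat) \<Rightarrow> real" where
  "sh n C \<beta> = (\<Sum>i<n. if 1 \<le> lk \<beta> i then lk C (\<beta> - e1 i) else 0)"

lemma le_single_iff: "(\<forall>k. lk (e1 i) k \<le> lk \<beta> k) \<longleftrightarrow> 1 \<le> lk \<beta> i"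
  by (auto simp: lookup_single when_def)

lemma lookup_var_mult: "lk (var i * C) \<beta> = (if 1 \<le> lk \<beta> i then lk C (\<beta> - e1 i) else 0)"
  using le_single_iff[of i \<beta>] by (simp add: var_def lookup_single_mult)

lemma lookup_svar_mult: "lk (svar n * C) \<beta> = sh n C \<beta>"
  by (simp add: svar_def sum_distrib_right lookup_sum lookup_var_mult sh_def)

lemma lookup_s1_mult: "lk ((svar n - 1) * C) \<beta> = sh n C \<beta> - lk C \<beta>"
  by (simp add: left_diff_distrib lookup_minus lookup_svar_mult)

lemma mono_e1 [simp]: "mmono (e1 i) x = x i"
  by (simp add: mmono_def)

lemma eval_var_mult: "eval (var i * C) x = x i * eval C x"
  by (simp add: var_def eval_single_mult)

lemma eval_svar_mult: "eval (svar n * C) x = (\<Sum>i<n. x i) * eval C x"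
  by (simp add: svar_def sum_distrib_right eval_sum eval_var_mult)

lemma sub_add_e1: "1 \<le> lk \<beta> i \<Longrightarrow> (\<beta> - e1 i) + e1 i = \<beta>"
  by (rule poly_mapping_eqI) (auto simp: lookup_add lookup_minus lookup_single when_def)

lemma add_sub_e1 [simp]: "(\<beta> + e1 i) - e1 i = \<beta>"
  by (rule poly_mapping_eqI) (auto simp: lookup_add lookup_minus lookup_single when_def)

lemma mon_deg_superset: "finite F \<Longrightarrow> ks \<beta> \<subseteq> F \<Longrightarrow> mon_deg \<beta> = (\<Sum>i\<in>F. lk \<beta> i)"
  unfolding mon_deg_def by (rule sum.mono_neutral_left) (auto simp: in_keys_iff)

lemma mon_deg_add: "mon_deg (\<beta> + \<gamma>) = mon_deg \<beta> + mon_deg \<gamma>"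
proof -
  let ?F = "ks \<beta> \<union> ks \<gamma>"
  have "mon_deg (\<beta> + \<gamma>) = (\<Sum>i\<in>?F. lk (\<beta>+\<gamma>) i)"
    by (rule mon_deg_superset) (auto dest: keys_add[THEN subsetD])
  then show ?thesis by (simp add: lookup_add sum.distrib mon_deg_superset[of ?F])
qed

lemma mon_deg_e1 [simp]: "mon_deg (e1 i) = 1"
  by (simp add: mon_deg_def)

lemma mon_deg_zero [simp]: "mon_deg 0 = 0"
  by (simp add: mon_deg_def)

lemma mon_deg_eq_0: "mon_deg \<beta> = 0 \<longleftrightarrow> \<beta> = 0"
proof
  assume "mon_deg \<beta> = 0"
  then have "\<forall>i\<in>ks \<beta>. lk \<beta> i = 0" by (simp add: mon_deg_def)
  then show "\<beta> = 0" by (metis in_keys_iff keys_eq_empty all_not_in_conv)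
qed simp

lemma mon_deg_sub_e1: "1 \<le> lk \<beta> i \<Longrightarrow> mon_deg (\<beta> - e1 i) + 1 = mon_deg \<beta>"
  using mon_deg_add[of "\<beta> - e1 i" "e1 i"] sub_add_e1 by simp

lemma mon_deg_pos: "1 \<le> lk \<beta> i \<Longrightarrow> 1 \<le> mon_deg \<beta>"
  using mon_deg_sub_e1 by fastforce

lemma card_keys_le_mon_deg: "card (ks \<beta>) \<le> mon_deg \<beta>"
proof -
  have "card (ks \<beta>) = (\<Sum>i\<in>ks \<beta>. 1)" by simp
  also have "\<dots> \<le> (\<Sum>i\<in>ks \<beta>. lk \<beta> i)" by (rule sum_mono) (auto simp: in_keys_iff)
  finally show ?thesis by (simp add: mon_deg_def)
qed

lemma eval_indep:
  assumes "\<forall>\<gamma>\<in>ks q. lk \<gamma> j = 0"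
  shows "eval q (x(j:=t)) = eval q x"
proof -
  have "mmono \<gamma> (x(j:=t)) = mmono \<gamma> x" if "\<gamma> \<in> ks q" for \<gamma>
    unfolding mmono_def using assms that by (intro prod.cong) (auto simp: in_keys_iff)
  then show ?thesis by (simp add: eval_mono)
qed

lemma H_facts:
  assumes "p \<in> H n d"
  shows "p \<noteq> 0" "nonneg_coeffs p" "\<And>\<beta>. \<beta> \<in> ks p \<Longrightarrow> mon_deg \<beta> \<le> d"
    "\<exists>\<beta>\<in>ks p. mon_deg \<beta> = d" "\<And>\<beta>. \<beta> \<in> ks p \<Longrightarrow> ks \<beta> \<subseteq> {..<n}"
    "\<And>x. (\<Sum>j<n. x j) = 1 \<Longrightarrow> eval p x = 1"
proof -
  have p0: "p \<noteq> 0" and td: "tdeg p = d" using assms by (auto simp: H_def)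
  have ne: "mon_deg ` ks p \<noteq> {}" using p0 by simp
  show "p \<noteq> 0" by fact
  show "nonneg_coeffs p" using assms by (simp add: H_def)
  show "mon_deg \<beta> \<le> d" if "\<beta> \<in> ks p" for \<beta>
    using td that by (auto simp: tdeg_def)
  show "\<exists>\<beta>\<in>ks p. mon_deg \<beta> = d"
    using Max_in[OF _ ne] td by (auto simp: tdeg_def)
  show "ks \<beta> \<subseteq> {..<n}" if "\<beta> \<in> ks p" for \<beta>
    using assms that by (auto simp: H_def in_vars_def)
  show "eval p x = 1" if "(\<Sum>j<n. x j) = 1" for x
    using assms that by (auto simp: H_def)
qed

lemma factor1:
  assumes pH: "p \<in> H n d" and jn: "j < n" and lin: "\<forall>\<beta>\<in>ks p. lk \<beta> j \<le> 1"
  shows "\<exists>A. nonneg_coeffs A \<and> p - 1 = (svar n - 1) * A \<and> (\<forall>\<gamma>\<in>ks A. mon_deg \<gamma> + 1 \<le> d)"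
proof -
  define fA where "fA \<gamma> = (if lk \<gamma> j = 0 then lk p (\<gamma> + e1 j) else 0)" for \<gamma>
  define fa where "fa \<gamma> = (if lk \<gamma> j = 0 then lk p \<gamma> else 0)" for \<gamma>
  have finA: "finite {\<gamma>. fA \<gamma> \<noteq> 0}"
  proof (rule finite_subset)
    show "{\<gamma>. fA \<gamma> \<noteq> 0} \<subseteq> (\<lambda>\<beta>. \<beta> - e1 j) ` ks p"
    proof
      fix \<gamma> assume "\<gamma> \<in> {\<gamma>. fA \<gamma> \<noteq> 0}"
      then have "\<gamma> + e1 j \<in> ks p" by (auto simp: fA_def in_keys_iff split: if_splits)
      then show "\<gamma> \<in> (\<lambda>\<beta>. \<beta> - e1 j) ` ks p" by (metis add_sub_e1 image_eqI)
    qed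
  qed simp
  have fina: "finite {\<gamma>. fa \<gamma> \<noteq> 0}"
    by (rule finite_subset[of _ "ks p"]) (auto simp: fa_def in_keys_iff)
  define A where "A = Abs_poly_mapping fA"
  define a0 where "a0 = Abs_poly_mapping fa"
  have lA: "lk A = fA" using finA by (simp add: A_def)
  have la: "lk a0 = fa" using fina by (simp add: a0_def)
  have nn: "nonneg_coeffs p" using H_facts[OF pH] by simp
  have dec: "p = a0 + var j * A"
  proof (rule poly_mapping_eqI)
    fix \<beta> :: "nat \<Rightarrow>\<^sub>0 nat"
    consider "lk \<beta> j = 0" | "lk \<beta> j = 1" | "lk \<beta> j \<ge> 2" by linarith
    then show "lk p \<beta> = lk (a0 + var j * A) \<beta>"
    proof cases
      case 1 then show ?thesis by (simp add: lookup_add lookup_var_mult la fa_def)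
    next
      case 2
      then have "lk (\<beta> - e1 j) j = 0" by (simp add: lookup_minus)
      then show ?thesis using 2 by (simp add: lookup_add lookup_var_mult la lA fa_def fA_def sub_add_e1)
    next
      case 3
      then have "\<beta> \<notin> ks p" using lin by fastforce
      moreover have "lk (\<beta> - e1 j) j \<noteq> 0" using 3 by (simp add: lookup_minus)
      ultimately show ?thesis using 3 by (simp add: lookup_add lookup_var_mult la lA fa_def fA_def in_keys_iff)
    qed
  qed
  have indA: "\<forall>\<gamma>\<in>ks A. lk \<gamma> j = 0" by (auto simp: in_keys_iff lA fA_def split: if_splits)
  have inda: "\<forall>\<gamma>\<in>ks a0. lk \<gamma> j = 0" by (auto simp: in_keys_iff la fa_def split: if_splits)
  define Q where "Q = a0 - 1 + (1 - (svar n - var j)) * A"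
  have "eval Q x = 0" for x
  proof -
    define S' where "S' = (\<Sum>i\<in>{..<n}-{j}. x i)"
    define x' where "x' = x(j := 1 - S')"
    have sumx: "(\<Sum>i<n. x i) = x j + S'"
      unfolding S'_def using jn by (simp add: sum.remove[of "{..<n}" j])
    have "(\<Sum>i<n. x' i) = x' j + (\<Sum>i\<in>{..<n}-{j}. x' i)"
      using jn by (simp add: sum.remove[of "{..<n}" j])
    also have "(\<Sum>i\<in>{..<n}-{j}. x' i) = S'" unfolding S'_def x'_def by (rule sum.cong) auto
    finally have "(\<Sum>i<n. x' i) = 1" by (simp add: x'_def)
    then have "eval p x' = 1" using H_facts(6)[OF pH] by blast
    then have "eval a0 x' + x' j * eval A x' = 1" by (subst (asm) dec) (simp add: eval_add eval_var_mult)
    then have E: "eval a0 x + (1 - S') * eval A x = 1"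
      unfolding x'_def using eval_indep[OF indA] eval_indep[OF inda] by simp
    have "Q = a0 - 1 + A - svar n * A + var j * A" by (simp add: Q_def algebra_simps)
    then have "eval Q x = eval a0 x - 1 + eval A x - (\<Sum>i<n. x i) * eval A x + x j * eval A x"
      by (simp add: eval_add eval_diff eval_svar_mult eval_var_mult)
    also have "\<dots> = 0" using E sumx by (simp add: algebra_simps)
    finally show ?thesis .
  qed
  then have "Q = 0" using identity_principle by blast
  then have "p - 1 = (svar n - 1) * A"
    by (subst dec) (simp add: Q_def algebra_simps eq_iff_diff_eq_0[symmetric])
  moreover have "nonneg_coeffs A" using nn by (simp add: nonneg_coeffs_def lA fA_def)
  moreover have "\<forall>\<gamma>\<in>ks A. mon_deg \<gamma> + 1 \<le> d"
  proof
    fix \<gamma> assume g: "\<gamma> \<in> ks A"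
    then have "\<gamma> + e1 j \<in> ks p" by (auto simp: in_keys_iff lA fA_def split: if_splits)
    then have "mon_deg (\<gamma> + e1 j) \<le> d" using H_facts(3)[OF pH] by blast
    then show "mon_deg \<gamma> + 1 \<le> d" by (simp add: mon_deg_add)
  qed
  ultimately show ?thesis by blast
qed



lemma CI:
  assumes "p - 1 = (svar n - 1) * A"
  shows "lk p \<beta> - (if \<beta> = 0 then 1 else 0) = sh n A \<beta> - lk A \<beta>"
proof -
  have "lk (p - 1) \<beta> = lk ((svar n - 1) * A) \<beta>" using assms by simp
  then show ?thesis by (simp add: lookup_minus lookup_one lookup_s1_mult when_def)
qed

lemma W_from_A:
  assumes nnp: "nonneg_coeffs p" and nnA: "nonneg_coeffs A" and fac: "p - 1 = (svar n - 1) * A"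
    and degA: "\<forall>\<gamma>\<in>ks A. mon_deg \<gamma> + 1 \<le> d"
  shows "p \<in> W n"
proof -
  define fAk where "fAk k \<gamma> = (if mon_deg \<gamma> = k then lk A \<gamma> else 0)" for k \<gamma>
  have finAk: "finite {\<gamma>. fAk k \<gamma> \<noteq> 0}" for k
    by (rule finite_subset[of _ "ks A"]) (auto simp: fAk_def in_keys_iff)
  define Ak where "Ak k = Abs_poly_mapping (fAk k)" for k
  have lAk: "lk (Ak k) \<gamma> = (if mon_deg \<gamma> = k then lk A \<gamma> else 0)" for k \<gamma>
    using finAk by (simp add: Ak_def fAk_def)
  define Bk where "Bk k = (\<Sum>i<k. Ak i)" for k
  have lBk: "lk (Bk k) \<gamma> = (if mon_deg \<gamma> < k then lk A \<gamma> else 0)" for k \<gamma>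
  proof -
    have "lk (Bk k) \<gamma> = (\<Sum>i<k. if mon_deg \<gamma> = i then lk A \<gamma> else 0)"
      by (simp add: Bk_def lookup_sum lAk)
    also have "\<dots> = (if mon_deg \<gamma> < k then lk A \<gamma> else 0)"
      by (simp add: sum.delta)
    finally show ?thesis .
  qed
  define g where "g k = 1 + (svar n - 1) * Bk k" for k
  have CIp: "lk p \<beta> - (if \<beta> = 0 then 1 else 0) = sh n A \<beta> - lk A \<beta>" for \<beta>
    using CI[OF fac] by blast
  have nnstep: "nonneg_coeffs (g k - Ak k)" for k
    unfolding nonneg_coeffs_def
  proof
    fix \<beta>
    have val: "lk (g k - Ak k) \<beta> = (if \<beta> = 0 then 1 else 0) + sh n (Bk k) \<beta> - lk (Bk k) \<beta> - lk (Ak k) \<beta>"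
      by (simp add: g_def lookup_add lookup_minus lookup_s1_mult lookup_one when_def)
    show "0 \<le> lk (g k - Ak k) \<beta>"
    proof (cases "mon_deg \<beta> \<le> k")
      case True
      have "sh n (Bk k) \<beta> = sh n A \<beta>"
        unfolding sh_def
      proof (rule sum.cong)
        fix i assume "i \<in> {..<n}"
        show "(if 1 \<le> lk \<beta> i then lk (Bk k) (\<beta> - e1 i) else 0) = (if 1 \<le> lk \<beta> i then lk A (\<beta> - e1 i) else 0)"
          using mon_deg_sub_e1[of \<beta> i] True by (auto simp: lBk)
      qed simp
      moreover have "lk (Bk k) \<beta> + lk (Ak k) \<beta> = lk A \<beta>" using True by (auto simp: lBk lAk)
      ultimately have "lk (g k - Ak k) \<beta> = lk p \<beta>" using val CIp[of \<beta>] by simp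
      then show ?thesis using nnp by (simp add: nonneg_coeffs_def)
    next
      case False
      have "sh n (Bk k) \<beta> = 0"
        unfolding sh_def
      proof (rule sum.neutral, rule ballI)
        fix i assume "i \<in> {..<n}"
        show "(if 1 \<le> lk \<beta> i then lk (Bk k) (\<beta> - e1 i) else 0) = 0"
          using mon_deg_sub_e1[of \<beta> i] False by (auto simp: lBk)
      qed
      moreover have "\<beta> \<noteq> 0" using False by auto
      ultimately have "lk (g k - Ak k) \<beta> = 0" using val False by (simp add: lBk lAk)
      then show ?thesis by simp
    qed
  qed
  have nnAk: "nonneg_coeffs (Ak k)" for k
    using nnA by (simp add: nonneg_coeffs_def lAk)
  have "g k \<in> W n" for k
  proof (induction k)
    case 0 then show ?case by (simp add: g_def Bk_def W.one)
  next
    case (Suc k)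
    have "g (Suc k) = g k - Ak k + svar n * Ak k"
      by (simp add: g_def Bk_def algebra_simps)
    then show ?case using W.step[OF Suc nnAk nnstep] by simp
  qed
  moreover have "Bk d = A"
  proof (rule poly_mapping_eqI)
    fix \<gamma>
    show "lk (Bk d) \<gamma> = lk A \<gamma>"
    proof (cases "\<gamma> \<in> ks A")
      case True then have "mon_deg \<gamma> < d" using degA by fastforce
      then show ?thesis by (simp add: lBk)
    next
      case False then show ?thesis by (simp add: lBk in_keys_iff)
    qed
  qed
  moreover have "p = 1 + (svar n - 1) * A" using fac by (simp add: algebra_simps)
  ultimately show ?thesis unfolding g_def by metis
qed



lemma sumset:
  fixes T :: "(nat \<Rightarrow>\<^sub>0 nat) set"
  assumes fin: "finite T" and ne: "T \<noteq> {}" and n1: "n \<ge> 1"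
  shows "card T + (n - 1) \<le> card ((\<lambda>(\<gamma>, i). \<gamma> + e1 i) ` (T \<times> {..<n}))"
proof -
  let ?S = "(\<lambda>(\<gamma>, i). \<gamma> + e1 i) ` (T \<times> {..<n})"
  define m0 where "m0 = Min ((\<lambda>t. lk t 0) ` T)"
  have "m0 \<in> (\<lambda>t. lk t 0) ` T" unfolding m0_def using fin ne by (intro Min_in) auto
  then obtain t0 where t0: "t0 \<in> T" "lk t0 0 = m0" by auto
  have mn: "m0 \<le> lk t 0" if "t \<in> T" for t unfolding m0_def using fin that by (intro Min_le) auto
  let ?S1 = "(\<lambda>t. t + e1 0) ` T"
  let ?S2 = "(\<lambda>i. t0 + e1 i) ` {1..<n}"
  have sub: "?S1 \<union> ?S2 \<subseteq> ?S"
  proof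
    fix \<beta> assume "\<beta> \<in> ?S1 \<union> ?S2"
    then show "\<beta> \<in> ?S"
    proof
      assume "\<beta> \<in> ?S1"
      then obtain t where "t \<in> T" "\<beta> = t + e1 0" by auto
      then show ?thesis using n1 by (auto intro!: image_eqI[of _ _ "(t, 0)"])
    next
      assume "\<beta> \<in> ?S2"
      then obtain i where "i \<in> {1..<n}" "\<beta> = t0 + e1 i" by auto
      then show ?thesis using t0 by (auto intro!: image_eqI[of _ _ "(t0, i)"])
    qed
  qed
  have disj: "?S1 \<inter> ?S2 = {}"
  proof (rule ccontr)
    assume "?S1 \<inter> ?S2 \<noteq> {}"
    then obtain t i where ti: "t \<in> T" "i \<in> {1..<n}" "t + e1 0 = t0 + e1 i" by blast
    then have "lk (t + e1 0) 0 = lk (t0 + e1 i) 0" by simp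
    then have "lk t 0 + 1 = lk t0 0" using ti(2) by (simp add: lookup_add lookup_single)
    then show False using mn[OF ti(1)] t0(2) by simp
  qed
  have inj1: "inj_on (\<lambda>t. t + e1 0) T" by (rule inj_onI) simp
  have inj2: "inj_on (\<lambda>i. t0 + e1 i) {1..<n}"
  proof (rule inj_onI)
    fix i i' assume "t0 + e1 i = t0 + e1 i'"
    then have "e1 i = e1 i'" by simp
    then have "lk (e1 i) i = lk (e1 i') i" by simp
    then show "i = i'" by (simp add: lookup_single when_def split: if_splits)
  qed
  have c2: "card ?S2 = n - 1" using card_image[OF inj2] by simp
  have c1: "card ?S1 = card T" using card_image[OF inj1] by simp
  have "card (?S1 \<union> ?S2) = card T + (n - 1)"
    using card_Un_disjoint[OF _ _ disj] fin c1 c2 by simp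
  moreover have "finite ?S" using fin by simp
  ultimately show ?thesis using card_mono[OF _ sub] by simp
qed

lemma count_from_A:
  assumes pH: "p \<in> H n d" and n1: "n \<ge> 1" and nnA: "nonneg_coeffs A"
    and fac: "p - 1 = (svar n - 1) * A" and degA: "\<forall>\<gamma>\<in>ks A. mon_deg \<gamma> + 1 \<le> d"
  shows "(n - 1) * d + 1 \<le> N p"
proof (cases "d = 0")
  case True
  have "p \<noteq> 0" using H_facts[OF pH] by simp
  then have "ks p \<noteq> {}" by simp
  then have "card (ks p) \<ge> 1" by (simp add: Suc_leI card_gt_0_iff)
  then show ?thesis using True by (simp add: N_def)
next
  case False
  then have d1: "d \<ge> 1" by simp
  have nnp: "nonneg_coeffs p" using H_facts[OF pH] by simp
  have CIp: "lk p \<beta> - (if \<beta> = 0 then 1 else 0) = sh n A \<beta> - lk A \<beta>" for \<beta>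
    using CI[OF fac] by blast
  define T where "T k = {\<gamma> \<in> ks A. mon_deg \<gamma> = k}" for k
  define C where "C k = {\<beta> \<in> ks p. mon_deg \<beta> = k}" for k
  define Sx where "Sx k = (\<lambda>(\<gamma>, i). \<gamma> + e1 i) ` (T k \<times> {..<n})" for k
  have finT: "finite (T k)" for k unfolding T_def by simp
  have finC: "finite (C k)" for k unfolding C_def by simp
  have Apos: "lk A \<gamma> > 0" if "\<gamma> \<in> ks A" for \<gamma>
    using nnA that by (simp add: nonneg_coeffs_def in_keys_iff order_less_le)
  have shex: "\<exists>i<n. 1 \<le> lk \<beta> i \<and> \<beta> - e1 i \<in> ks A" if "sh n A \<beta> \<noteq> 0" for \<beta>
  proof (rule ccontr)
    assume "\<not> ?thesis"
    then have "sh n A \<beta> = 0" unfolding sh_def by (intro sum.neutral) (auto simp: in_keys_iff)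
    then show False using that by simp
  qed
  have down: "T m \<noteq> {}" if neS: "T (Suc m) \<noteq> {}" for m
  proof -
    obtain \<gamma> where g: "\<gamma> \<in> T (Suc m)" using neS by blast
    then have gA: "\<gamma> \<in> ks A" and gd: "mon_deg \<gamma> = Suc m" by (auto simp: T_def)
    have "\<gamma> \<noteq> 0" using gd by auto
    then have "lk p \<gamma> = sh n A \<gamma> - lk A \<gamma>" using CIp[of \<gamma>] by simp
    moreover have "lk p \<gamma> \<ge> 0" using nnp by (simp add: nonneg_coeffs_def)
    ultimately have "sh n A \<gamma> \<noteq> 0" using Apos[OF gA] by linarith
    then obtain i where "i < n" "1 \<le> lk \<gamma> i" "\<gamma> - e1 i \<in> ks A" using shex by blast
    moreover have "mon_deg (\<gamma> - e1 i) = m" using mon_deg_sub_e1[OF \<open>1 \<le> lk \<gamma> i\<close>] gd by simp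
    ultimately show ?thesis by (auto simp: T_def)
  qed
  have top: "T (d - 1) \<noteq> {}"
  proof -
    obtain \<beta> where b: "\<beta> \<in> ks p" "mon_deg \<beta> = d" using H_facts(4)[OF pH] by blast
    have "\<beta> \<noteq> 0" using b d1 by auto
    have "lk A \<beta> = 0" using degA b by (metis in_keys_iff not_less_eq_eq Suc_eq_plus1 order_refl)
    then have "lk p \<beta> = sh n A \<beta>" using CIp[of \<beta>] \<open>\<beta> \<noteq> 0\<close> by simp
    then have "sh n A \<beta> \<noteq> 0" using b by (simp add: in_keys_iff)
    then obtain i where "i < n" "1 \<le> lk \<beta> i" "\<beta> - e1 i \<in> ks A" using shex by blast
    moreover have "mon_deg (\<beta> - e1 i) = d - 1" using mon_deg_sub_e1[OF \<open>1 \<le> lk \<beta> i\<close>] b by simp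
    ultimately show ?thesis by (auto simp: T_def)
  qed
  have Tne: "T m \<noteq> {}" if "m < d" for m
  proof -
    have "T (d - 1 - j) \<noteq> {}" if "j \<le> d - 1" for j
      using that
    proof (induction j)
      case 0 then show ?case using top by simp
    next
      case (Suc j)
      then have "T (d - 1 - j) \<noteq> {}" by simp
      moreover have "d - 1 - j = Suc (d - 1 - Suc j)" using Suc.prems by arith
      ultimately show ?case using down by metis
    qed
    then have "T (d - 1 - (d - 1 - m)) \<noteq> {}" by simp
    moreover have "d - 1 - (d - 1 - m) = m" using that by arith
    ultimately show ?thesis by simp
  qed
  have Td: "T d = {}" using degA by (auto simp: T_def)
  have T0: "card (T 0) = 1"
  proof -
    have "T 0 \<subseteq> {0}" by (auto simp: T_def mon_deg_eq_0)
    moreover have "T 0 \<noteq> {}" using Tne d1 by simp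
    ultimately have "T 0 = {0}" by blast
    then show ?thesis by simp
  qed
  have inC: "Sx m - T (Suc m) \<subseteq> C (Suc m)" for m
  proof
    fix \<beta> assume "\<beta> \<in> Sx m - T (Suc m)"
    then obtain \<gamma> i where gi: "\<gamma> \<in> T m" "i < n" "\<beta> = \<gamma> + e1 i" and nT: "\<beta> \<notin> T (Suc m)"
      by (auto simp: Sx_def)
    have gA: "\<gamma> \<in> ks A" and gd: "mon_deg \<gamma> = m" using gi by (auto simp: T_def)
    have bd: "mon_deg \<beta> = Suc m" using gi gd by (simp add: mon_deg_add)
    then have "\<beta> \<noteq> 0" by auto
    have "lk A \<beta> = 0" using nT bd by (auto simp: T_def in_keys_iff)
    then have eq: "lk p \<beta> = sh n A \<beta>" using CIp[of \<beta>] \<open>\<beta> \<noteq> 0\<close> by simp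
    have li: "1 \<le> lk \<beta> i" using gi by (simp add: lookup_add)
    have "lk A \<gamma> \<le> sh n A \<beta>"
    proof -
      have "(if 1 \<le> lk \<beta> i then lk A (\<beta> - e1 i) else 0) \<le> sh n A \<beta>"
        unfolding sh_def using gi(2) nnA
        by (intro member_le_sum) (auto simp: nonneg_coeffs_def)
      then show ?thesis using li gi(3) by simp
    qed
    then have "lk p \<beta> > 0" using eq Apos[OF gA] by simp
    then show "\<beta> \<in> C (Suc m)" using bd by (auto simp: C_def in_keys_iff)
  qed
  have step: "int (card (C (Suc m))) \<ge> int (card (T m)) + int n - 1 - int (card (T (Suc m)))" if "m < d" for m
  proof -
    have "card (T m) + (n - 1) \<le> card (Sx m)"
      unfolding Sx_def using sumset[OF finT Tne[OF that] n1] .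
    moreover have "card (Sx m) - card (T (Suc m)) \<le> card (Sx m - T (Suc m))"
      by (rule diff_card_le_card_Diff) (simp add: finT)
    moreover have "card (Sx m - T (Suc m)) \<le> card (C (Suc m))"
      by (rule card_mono[OF finC inC])
    ultimately show ?thesis using n1 by linarith
  qed
  have tele: "int (\<Sum>k\<in>{1..m}. card (C k)) + int (card (T m)) \<ge> 1 + int m * (int n - 1)" if "m \<le> d" for m
    using that
  proof (induction m)
    case 0 then show ?case using T0 by simp
  next
    case (Suc m)
    then have "int (\<Sum>k\<in>{1..m}. card (C k)) + int (card (T m)) \<ge> 1 + int m * (int n - 1)" by simp
    moreover have "int (card (C (Suc m))) \<ge> int (card (T m)) + int n - 1 - int (card (T (Suc m)))"
      using step Suc.prems by simp
    ultimately show ?case by (simp add: algebra_simps)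
  qed
  have sumC: "int (\<Sum>k\<in>{1..d}. card (C k)) \<ge> 1 + int d * (int n - 1)"
    using tele[of d] Td by simp
  have "(\<Sum>k\<in>{1..d}. card (C k)) = card (\<Union>k\<in>{1..d}. C k)"
    by (rule card_UN_disjoint[symmetric]) (auto simp: finC C_def)
  also have "\<dots> \<le> card (ks p)" by (rule card_mono) (auto simp: C_def)
  finally have "int (card (ks p)) \<ge> 1 + int d * (int n - 1)" using sumC by linarith
  moreover have "int ((n - 1) * d + 1) = 1 + int d * (int n - 1)" using n1 by (simp add: of_nat_diff algebra_simps)
  ultimately have "int ((n - 1) * d + 1) \<le> int (card (ks p))" by linarith
  then show ?thesis unfolding N_def by (simp only: of_nat_le_iff)
qed



lemma coeff_lin_pow:
  fixes c w :: real
  shows "coeff ([:c, w:] ^ e) i = (if i \<le> e then of_nat (e choose i) * w ^ i * c ^ (e - i) else 0)"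
proof (cases "i \<le> e")
  case True then show ?thesis by (simp add: coeff_linear_poly_power)
next
  case False
  have "degree ([:c, w:] ^ e) \<le> degree [:c, w:] * e" by (rule degree_power_le)
  also have "\<dots> \<le> e" by simp
  finally show ?thesis using False by (simp add: coeff_eq_0)
qed

lemma pair_lemma:
  assumes pH: "p \<in> H n d"
    and Vn: "V \<subseteq> {..<n}" and jV: "j \<in> V"
    and an: "a < n" and bn: "b < n" and aV: "a \<notin> V" and bV: "b \<notin> V" and ab: "a \<noteq> b"
    and Zp: "\<forall>\<beta>\<in>ks p. 0 < lk \<beta> j \<longrightarrow> ks \<beta> \<subseteq> V \<union> {a, b} \<longrightarrow> ks \<beta> \<subseteq> V"
    and K2: "2 \<le> K" and Kex: "\<exists>\<beta>\<in>ks p. ks \<beta> \<subseteq> V \<and> lk \<beta> j = K"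
    and Kmax: "\<forall>\<beta>\<in>ks p. ks \<beta> \<subseteq> V \<longrightarrow> lk \<beta> j \<le> K"
  shows "\<exists>\<beta>\<in>ks p. ks \<beta> \<subseteq> V \<union> {a, b} \<and> lk \<beta> j = 0 \<and> lk \<beta> a = K - 1 \<and> lk \<beta> b = 1"
proof (rule ccontr)
  assume nex: "\<not> ?thesis"
  have finV: "finite V" using Vn finite_subset by blast
  have nnp: "nonneg_coeffs p" using H_facts[OF pH] by simp
  have aj: "a \<noteq> j" and bj: "b \<noteq> j" using aV bV jV by auto
  define c0 :: real where "c0 = real (card V) - 1"
  define S1 where "S1 = {\<beta>\<in>ks p. ks \<beta> \<subseteq> V \<union> {a, b} \<and> lk \<beta> j = 0}"
  define S2 where "S2 = {\<beta>\<in>ks p. ks \<beta> \<subseteq> V \<and> 0 < lk \<beta> j}"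
  define pt where "pt u v = (\<lambda>i. if i = j then 1 - c0 - u - v else if i \<in> V then 1 else if i = a then u else if i = b then v else 0)" for u v :: real
  have finS1: "finite S1" and finS2: "finite S2" by (simp_all add: S1_def S2_def)
  have disj: "S1 \<inter> S2 = {}" by (auto simp: S1_def S2_def)
  have sumpt: "(\<Sum>i<n. pt u v i) = 1" for u v
  proof -
    have "(\<Sum>i<n. pt u v i) = (\<Sum>i\<in>V \<union> {a, b}. pt u v i)"
      by (rule sum.mono_neutral_right) (use Vn an bn jV in \<open>auto simp: pt_def\<close>)
    also have "\<dots> = (\<Sum>i\<in>V. pt u v i) + u + v"
      using finV aV bV ab jV aj bj by (simp add: sum.union_disjoint pt_def)
    also have "(\<Sum>i\<in>V. pt u v i) = pt u v j + (\<Sum>i\<in>V - {j}. pt u v i)"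
      using finV jV by (simp add: sum.remove)
    also have "(\<Sum>i\<in>V - {j}. pt u v i) = (\<Sum>i\<in>V - {j}. 1)" by (rule sum.cong) (auto simp: pt_def)
    also have "\<dots> = real (card V) - 1"
    proof -
      have "card V \<ge> 1" using finV jV by (metis One_nat_def Suc_leI card_gt_0_iff empty_iff)
      then show ?thesis using finV jV by (simp add: of_nat_diff)
    qed
    finally show ?thesis by (simp add: pt_def c0_def)
  qed
  have m1: "mmono \<beta> (pt u v) = u ^ lk \<beta> a * v ^ lk \<beta> b" if "\<beta> \<in> S1" for \<beta> u v
  proof -
    have "mmono \<beta> (pt u v) = (\<Prod>i\<in>V \<union> {a, b}. pt u v i ^ lk \<beta> i)"
      by (rule mono_superset) (use that finV in \<open>auto simp: S1_def\<close>)
    also have "\<dots> = (\<Prod>i\<in>V. pt u v i ^ lk \<beta> i) * u ^ lk \<beta> a * v ^ lk \<beta> b"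
      using finV aV bV ab aj bj by (simp add: prod.union_disjoint pt_def)
    also have "(\<Prod>i\<in>V. pt u v i ^ lk \<beta> i) = 1"
      using that by (intro prod.neutral) (auto simp: pt_def S1_def)
    finally show ?thesis by simp
  qed
  have m2: "mmono \<beta> (pt u v) = (1 - c0 - u - v) ^ lk \<beta> j" if "\<beta> \<in> S2" for \<beta> u v
  proof -
    have "mmono \<beta> (pt u v) = (\<Prod>i\<in>V. pt u v i ^ lk \<beta> i)"
      by (rule mono_superset) (use that finV in \<open>auto simp: S2_def\<close>)
    also have "\<dots> = pt u v j ^ lk \<beta> j * (\<Prod>i\<in>V - {j}. pt u v i ^ lk \<beta> i)"
      using finV jV by (simp add: prod.remove)
    also have "(\<Prod>i\<in>V - {j}. pt u v i ^ lk \<beta> i) = 1"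
      by (intro prod.neutral) (auto simp: pt_def)
    finally show ?thesis by (simp add: pt_def)
  qed
  have m3: "mmono \<beta> (pt u v) = 0" if "\<beta> \<in> ks p" "\<beta> \<notin> S1" "\<beta> \<notin> S2" for \<beta> u v
  proof -
    have "\<exists>i\<in>ks \<beta>. pt u v i = 0"
    proof (cases "ks \<beta> \<subseteq> V \<union> {a, b}")
      case True
      then have "0 < lk \<beta> j" using that by (auto simp: S1_def)
      then have "ks \<beta> \<subseteq> V" using Zp True that(1) by blast
      then show ?thesis using that \<open>0 < lk \<beta> j\<close> by (auto simp: S2_def)
    next
      case False
      then obtain i where "i \<in> ks \<beta>" "i \<notin> V \<union> {a, b}" by blast
      moreover then have "i \<noteq> j" using jV by auto
      ultimately show ?thesis by (auto simp: pt_def)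
    qed
    then obtain i where "i \<in> ks \<beta>" "pt u v i = 0" by blast
    then show ?thesis unfolding mmono_def
      by (intro prod_zero) (auto simp: in_keys_iff)
  qed
  have evid: "(\<Sum>\<beta>\<in>S1. lk p \<beta> * (u ^ lk \<beta> a * v ^ lk \<beta> b)) + (\<Sum>\<beta>\<in>S2. lk p \<beta> * (1 - c0 - u - v) ^ lk \<beta> j) = 1" for u v
  proof -
    have "eval p (pt u v) = 1" using H_facts(6)[OF pH] sumpt by blast
    moreover have "eval p (pt u v) = (\<Sum>\<beta>\<in>S1 \<union> S2. lk p \<beta> * mmono \<beta> (pt u v))"
      unfolding eval_mono
      by (rule sum.mono_neutral_right) (use m3 in \<open>auto simp: S1_def S2_def\<close>)
    moreover have "\<dots> = (\<Sum>\<beta>\<in>S1. lk p \<beta> * mmono \<beta> (pt u v)) + (\<Sum>\<beta>\<in>S2. lk p \<beta> * mmono \<beta> (pt u v))"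
      by (rule sum.union_disjoint[OF finS1 finS2 disj])
    ultimately show ?thesis using m1 m2 by simp
  qed
  obtain k1 where k1: "K = Suc k1" using K2 by (cases K) auto
  have k1pos: "k1 \<ge> 1" using K2 k1 by simp
  \<comment> \<open>extract the coefficient of u^(K-1)\<close>
  define cf where "cf v e = (if k1 \<le> e then of_nat (e choose (k1)) * (-1) ^ (k1) * (1 - c0 - v) ^ (e - (k1)) else 0)" for v :: real and e :: nat
  have coefid: "(\<Sum>\<beta>\<in>S1. if lk \<beta> a = k1 then lk p \<beta> * v ^ lk \<beta> b else 0) = - (\<Sum>\<beta>\<in>S2. lk p \<beta> * cf v (lk \<beta> j))" for v
  proof -
    define L where "L = (\<Sum>\<beta>\<in>S1. monom (lk p \<beta> * v ^ lk \<beta> b) (lk \<beta> a))"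
    define R where "R = 1 - (\<Sum>\<beta>\<in>S2. smult (lk p \<beta>) ([:1 - c0 - v, -1:] ^ lk \<beta> j))"
    have "poly L u = poly R u" for u
    proof -
      have "poly L u = (\<Sum>\<beta>\<in>S1. lk p \<beta> * (u ^ lk \<beta> a * v ^ lk \<beta> b))"
        by (simp add: L_def poly_sum poly_monom algebra_simps)
      moreover have "poly R u = 1 - (\<Sum>\<beta>\<in>S2. lk p \<beta> * (1 - c0 - u - v) ^ lk \<beta> j)"
        by (simp add: R_def poly_sum poly_power algebra_simps)
      ultimately show ?thesis using evid[of u v] by simp
    qed
    then have "L = R" using poly_eq_poly_eq_iff by blast
    then have "coeff L (k1) = coeff R (k1)" by simp
    moreover have "coeff L (k1) = (\<Sum>\<beta>\<in>S1. if lk \<beta> a = k1 then lk p \<beta> * v ^ lk \<beta> b else 0)"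
      by (simp add: L_def coeff_sum)
    moreover have "coeff R (k1) = - (\<Sum>\<beta>\<in>S2. lk p \<beta> * cf v (lk \<beta> j))"
      using k1pos by (simp add: R_def coeff_sum coeff_lin_pow cf_def coeff_1 sum_negf)
    ultimately show ?thesis by simp
  qed
  define E1 where "E1 = (\<Sum>\<beta>\<in>S2. if lk \<beta> j = k1 then lk p \<beta> else 0)"
  define Hk where "Hk = (\<Sum>\<beta>\<in>S2. if lk \<beta> j = Suc k1 then lk p \<beta> else 0)"
  have S2le: "lk \<beta> j \<le> Suc k1" if "\<beta> \<in> S2" for \<beta>
    using Kmax that k1 by (auto simp: S2_def)
  have cfv: "cf v e = (-1) ^ k1 * ((if e = k1 then 1 else 0) + (if e = Suc k1 then real (Suc k1) * (1 - c0 - v) else 0))"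
    if eK: "e \<le> Suc k1" for v e
  proof -
    consider "e < k1" | "e = k1" | "e = Suc k1" using eK by linarith
    then show ?thesis by cases (auto simp: cf_def)
  qed
  have sum2: "(\<Sum>\<beta>\<in>S2. lk p \<beta> * cf v (lk \<beta> j)) = (-1) ^ k1 * (E1 + real (Suc k1) * Hk * (1 - c0 - v))" for v
  proof -
    have "(\<Sum>\<beta>\<in>S2. lk p \<beta> * cf v (lk \<beta> j)) =
      (\<Sum>\<beta>\<in>S2. (-1) ^ k1 * ((if lk \<beta> j = k1 then lk p \<beta> else 0) + real (Suc k1) * (1 - c0 - v) * (if lk \<beta> j = Suc k1 then lk p \<beta> else 0)))"
      by (rule sum.cong) (auto simp: cfv S2le)
    also have "\<dots> = (-1) ^ k1 * (E1 + real (Suc k1) * (1 - c0 - v) * Hk)"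
      by (simp add: E1_def Hk_def sum_distrib_left[symmetric] sum.distrib)
    finally show ?thesis by (simp add: algebra_simps)
  qed
  define g where "g v = (\<Sum>\<beta>\<in>S1. if lk \<beta> a = k1 then lk p \<beta> * v ^ lk \<beta> b else 0)" for v :: real
  define \<alpha>1 where "\<alpha>1 = (-1) ^ k1 * real (Suc k1) * Hk"
  have gaff: "g v - g 0 = \<alpha>1 * v" for v
    using coefid[of v] coefid[of 0] sum2[of v] sum2[of 0] unfolding g_def \<alpha>1_def
    by (simp add: algebra_simps)
  have Hkpos: "Hk > 0"
  proof -
    obtain \<beta>0 where b0: "\<beta>0 \<in> ks p" "ks \<beta>0 \<subseteq> V" "lk \<beta>0 j = K" using Kex by blast
    then have b0S: "\<beta>0 \<in> S2" using K2 by (auto simp: S2_def)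
    have "(if lk \<beta>0 j = Suc k1 then lk p \<beta>0 else 0) \<le> Hk"
      unfolding Hk_def using nnp finS2 b0S by (intro member_le_sum) (auto simp: nonneg_coeffs_def)
    moreover have "lk p \<beta>0 > 0" using nnp b0(1) by (simp add: nonneg_coeffs_def in_keys_iff order_less_le)
    ultimately show ?thesis using b0(3) k1 by simp
  qed
  have a1nz: "\<alpha>1 \<noteq> 0" using Hkpos by (simp add: \<alpha>1_def)
  define t where "t \<beta> v = (if lk \<beta> a = k1 then lk p \<beta> * (v ^ lk \<beta> b - 0 ^ lk \<beta> b) else 0)" for \<beta> v
  have gt: "g v - g 0 = (\<Sum>\<beta>\<in>S1. t \<beta> v)" for v
    unfolding g_def t_def by (simp add: sum_subtractf[symmetric] algebra_simps if_distrib cong: if_cong)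
  have tb: "t \<beta> (1/2) \<le> t \<beta> 1 / 4 \<and> 0 \<le> t \<beta> 1" if "\<beta> \<in> S1" for \<beta>
  proof (cases "lk \<beta> a = k1")
    case True
    have "lk \<beta> b \<noteq> 1" using nex that True k1 by (auto simp: S1_def)
    then consider "lk \<beta> b = 0" | "lk \<beta> b \<ge> 2" by linarith
    then have "((1/2::real) ^ lk \<beta> b - 0 ^ lk \<beta> b) \<le> (1 ^ lk \<beta> b - 0 ^ lk \<beta> b) / 4 \<and> (0::real) \<le> 1 ^ lk \<beta> b - 0 ^ lk \<beta> b"
    proof cases
      case 1 then show ?thesis by simp
    next
      case 2
      have "(1/2::real) ^ lk \<beta> b \<le> (1/2) ^ 2" by (rule power_decreasing[OF 2]) auto
      moreover have "(0::real) ^ lk \<beta> b = 0" using 2 by simp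
      ultimately show ?thesis by (simp add: power2_eq_square zero_power)
    qed
    then obtain X Y where XY: "X = ((1/2::real) ^ lk \<beta> b - 0 ^ lk \<beta> b)" "Y = (1 ^ lk \<beta> b - 0 ^ lk \<beta> b)"
      "X \<le> Y / 4" "0 \<le> Y" by blast
    moreover have pp: "lk p \<beta> \<ge> 0" using nnp by (simp add: nonneg_coeffs_def)
    have A1: "lk p \<beta> * X \<le> lk p \<beta> * (Y / 4)" using XY(3) pp by (rule mult_left_mono)
    have A2: "0 \<le> lk p \<beta> * Y" using pp XY(4) by simp
    moreover have "t \<beta> (1/2) = lk p \<beta> * X" "t \<beta> 1 = lk p \<beta> * Y" using True XY by (simp_all add: t_def)
    ultimately show ?thesis using A1 A2 by simp
  next
    case False then show ?thesis by (simp add: t_def)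
  qed
  have "\<alpha>1 * (1/2) \<le> \<alpha>1 * 1 / 4"
  proof -
    have "\<alpha>1 * (1/2) = (\<Sum>\<beta>\<in>S1. t \<beta> (1/2))" using gt[of "1/2"] gaff[of "1/2"] by simp
    also have "\<dots> \<le> (\<Sum>\<beta>\<in>S1. t \<beta> 1 / 4)" by (rule sum_mono) (use tb in blast)
    also have "\<dots> = \<alpha>1 * 1 / 4" using gt[of 1] gaff[of 1] by (simp add: sum_divide_distrib[symmetric])
    finally show ?thesis .
  qed
  moreover have "\<alpha>1 \<ge> 0"
  proof -
    have "\<alpha>1 = (\<Sum>\<beta>\<in>S1. t \<beta> 1)" using gt[of 1] gaff[of 1] by simp
    also have "\<dots> \<ge> 0" by (rule sum_nonneg) (use tb in blast)
    finally show ?thesis .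
  qed
  ultimately show False using a1nz by linarith
qed



lemma arith_c2:
  fixes n d M N cV cX z :: nat
  assumes nb: "n \<ge> 2*d^2+2*d" and d2: "d \<ge> 2" and nM: "n*M \<le> d*N" and Ns: "N \<le> (n-1)*d+1"
    and cV: "cV + 1 \<le> d" and cX: "cX + 1 \<le> M" and zb: "n \<le> z + cV + cX" and zc: "(z choose 2) + 1 \<le> N"
    and n1: "n \<ge> 1"
  shows False
proof -
  define D where "D = int d"
  define nn where "nn = int n"
  define Z where "Z = int z"
  have D2: "D \<ge> 2" using d2 by (simp add: D_def)
  have "int (2*d^2+2*d) \<le> int n" using nb by (simp only: of_nat_le_iff)
  then have nb': "nn \<ge> 2*D^2 + 2*D" unfolding nn_def D_def by simp
  have "int N \<le> int ((n-1)*d+1)" using Ns by (simp only: of_nat_le_iff)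
  moreover have "int ((n-1)*d+1) = (nn - 1) * D + 1" using n1 unfolding nn_def D_def by (simp add: of_nat_diff)
  ultimately have Ns': "int N \<le> (nn - 1) * D + 1" by simp
  have "int (n*M) \<le> int (d*N)" using nM by (simp only: of_nat_le_iff)
  then have nM': "nn * int M \<le> D * int N" unfolding nn_def D_def by simp
  have "nn * int M \<le> D * ((nn - 1) * D + 1)"
    using nM' Ns' D2 by (smt (verit) mult_left_mono)
  also have "\<dots> < nn * D^2" using D2 by (simp add: algebra_simps power2_eq_square)
  finally have "nn * int M < nn * D^2" .
  then have Mlt: "int M < D^2" using nb' D2 by (smt (verit) mult_le_cancel_left power2_eq_square zero_le_mult_iff)
  have zlow: "Z \<ge> nn - D^2 - D + 3"
    using zb cV cX Mlt unfolding Z_def nn_def D_def by linarith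
  define w where "w = nn - D^2 - D + 3"
  have w1: "w \<ge> D^2 + D + 3" using nb' by (simp add: w_def)
  have w2: "w - 1 - 2*D \<ge> D^2 - D + 2" using w1 by simp
  have pos2: "D^2 - D + 2 \<ge> 0" using D2 by (simp add: power2_eq_square)
  have "w * (w - 1 - 2*D) \<ge> (D^2 + D + 3) * (D^2 - D + 2)"
  proof (rule mult_mono[OF w1 w2 _ pos2])
    have "D^2 \<ge> 0" by simp
    then show "0 \<le> w" using w1 D2 by linarith
  qed
  moreover have "(D^2 + D + 3) * (D^2 - D + 2) - 2*D^3 - 2*D^2 + 8*D > 0"
  proof -
    have "(D^2 + D + 3) * (D^2 - D + 2) - 2*D^3 - 2*D^2 + 8*D = (D*(D-1))^2 + D^2 + 7*D + 6"
      by (simp add: algebra_simps power2_eq_square power3_eq_cube)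
    also have "\<dots> > 0" using D2 by (smt (verit) zero_le_power2)
    finally show ?thesis .
  qed
  ultimately have keyw: "w * (w - 1) > 2 * (nn - 1) * D"
    by (simp add: w_def algebra_simps power2_eq_square power3_eq_cube) 
  have w0: "w \<ge> 1" using w1 D2 zero_le_power2[of D] by linarith
  have Zw: "Z \<ge> w" using zlow by (simp add: w_def)
  have "Z * (Z - 1) \<ge> w * (w - 1)"
    by (rule mult_mono) (use w0 Zw in linarith)+
  then have zz: "Z * (Z - 1) > 2 * (nn - 1) * D" using keyw by linarith
  have "2 * int (z choose 2) = Z * (Z - 1)"
  proof -
    have "2 * (z choose 2) = z * (z - 1)"
    proof (induction z)
      case 0 then show ?case by simp
    next
      case (Suc m)
      have "Suc m choose 2 = m + (m choose 2)" by (simp add: numeral_2_eq_2)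
      then show ?case using Suc by (cases m) (simp_all add: algebra_simps)
    qed
    then have "int (2 * (z choose 2)) = int (z * (z - 1))" by (rule arg_cong)
    moreover have "int (z * (z - 1)) = Z * (Z - 1)" by (cases z) (simp_all add: Z_def algebra_simps)
    ultimately show ?thesis by simp
  qed
  have "int ((z choose 2) + 1) \<le> int N" using zc by (simp only: of_nat_le_iff)
  moreover have "int (z choose 2) + 1 = int ((z choose 2) + 1)" by simp
  ultimately have "int (z choose 2) + 1 \<le> int N" by linarith
  then show False using zz Ns' \<open>2 * int (z choose 2) = Z * (Z - 1)\<close> by linarith
qed



lemma card_filter_sum: "finite S \<Longrightarrow> card {x\<in>S. P x} = (\<Sum>x\<in>S. if P x then 1 else 0::nat)"
  by (simp add: sum.If_cases Int_def conj_commute)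

lemma case2:
  assumes pH: "p \<in> H n d" and n1: "n \<ge> 1" and nbig: "n \<ge> 2 * d ^ 2 + 2 * d"
    and all2: "\<forall>j<n. \<exists>\<beta>\<in>ks p. 2 \<le> lk \<beta> j"
  shows "(n - 1) * d + 2 \<le> N p"
proof (rule ccontr)
  assume "\<not> ?thesis"
  then have Nsmall: "N p \<le> (n - 1) * d + 1" by simp
  have finp: "finite (ks p)" by simp
  define M where "M j = card {\<beta>\<in>ks p. j \<in> ks \<beta>}" for j
  have sumM: "(\<Sum>j<n. M j) \<le> d * N p"
  proof -
    have "(\<Sum>j<n. M j) = (\<Sum>j<n. \<Sum>\<beta>\<in>ks p. if j \<in> ks \<beta> then 1 else 0)"
      by (simp add: M_def card_filter_sum)
    also have "\<dots> = (\<Sum>\<beta>\<in>ks p. \<Sum>j<n. if j \<in> ks \<beta> then 1 else 0)" by (rule sum.swap)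
    also have "\<dots> \<le> (\<Sum>\<beta>\<in>ks p. d)"
    proof (rule sum_mono)
      fix \<beta> assume b: "\<beta> \<in> ks p"
      have "(\<Sum>j<n. if j \<in> ks \<beta> then 1 else 0) = card {j\<in>{..<n}. j \<in> ks \<beta>}"
        using card_filter_sum[of "{..<n}" "\<lambda>j. j \<in> ks \<beta>"] by simp
      also have "\<dots> \<le> card (ks \<beta>)" by (rule card_mono) auto
      also have "\<dots> \<le> mon_deg \<beta>" by (rule card_keys_le_mon_deg)
      also have "\<dots> \<le> d" using H_facts(3)[OF pH b] .
      finally show "(\<Sum>j<n. if j \<in> ks \<beta> then 1 else 0) \<le> d" .
    qed
    also have "\<dots> = d * N p" by (simp add: N_def)
    finally show ?thesis .
  qed
  obtain j where jn: "j < n" and jmin: "\<forall>i<n. M j \<le> M i"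
  proof -
    have "0 \<in> {..<n}" using n1 by simp
    then have "M ` {..<n} \<noteq> {}" by blast
    then have "Min (M ` {..<n}) \<in> M ` {..<n}" by (intro Min_in) auto
    then obtain j where "j < n" "M j = Min (M ` {..<n})" by auto
    moreover have "\<forall>i<n. Min (M ` {..<n}) \<le> M i" by (auto intro: Min_le)
    ultimately show ?thesis using that by auto
  qed
  have nM: "n * M j \<le> d * N p"
  proof -
    have "n * M j = (\<Sum>i<n. M j)" by simp
    also have "\<dots> \<le> (\<Sum>i<n. M i)" by (rule sum_mono) (use jmin in auto)
    finally show ?thesis using sumM by linarith
  qed
  obtain \<alpha> where \<alpha>p: "\<alpha> \<in> ks p" and \<alpha>j: "2 \<le> lk \<alpha> j" using all2 jn by blast
  define V where "V = ks \<alpha>"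
  have jV: "j \<in> V" using \<alpha>j by (simp add: V_def in_keys_iff)
  have Vn: "V \<subseteq> {..<n}" using H_facts(5)[OF pH \<alpha>p] by (simp add: V_def)
  have finV: "finite V" by (simp add: V_def)
  have cardV: "card V + 1 \<le> d"
  proof -
    have "mon_deg \<alpha> = lk \<alpha> j + (\<Sum>i\<in>V - {j}. lk \<alpha> i)"
      unfolding mon_deg_def V_def[symmetric] using finV jV by (simp add: sum.remove)
    moreover have "(\<Sum>i\<in>V - {j}. lk \<alpha> i) \<ge> (\<Sum>i\<in>V - {j}. 1)"
      by (rule sum_mono) (auto simp: V_def in_keys_iff)
    moreover have "(\<Sum>i\<in>V - {j}. (1::nat)) = card V - 1" using finV jV by simp
    moreover have "card V \<ge> 1" using finV jV by (metis One_nat_def Suc_leI card_gt_0_iff empty_iff)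
    ultimately have "card V + 1 \<le> mon_deg \<alpha>" using \<alpha>j by linarith
    then show ?thesis using H_facts(3)[OF pH \<alpha>p] by linarith
  qed
  have d2: "d \<ge> 2" using cardV finV jV by (metis One_nat_def Suc_leI card_gt_0_iff empty_iff add_le_mono1 le_trans one_add_one)
  define Bset where "Bset = {\<beta>\<in>ks p. j \<in> ks \<beta> \<and> \<not> ks \<beta> \<subseteq> V}"
  define ch where "ch \<beta> = (SOME i. i \<in> ks \<beta> \<and> i \<notin> V)" for \<beta> :: "nat \<Rightarrow>\<^sub>0 nat"
  have chp: "ch \<beta> \<in> ks \<beta> \<and> ch \<beta> \<notin> V" if "\<beta> \<in> Bset" for \<beta>
  proof -
    have "\<exists>i. i \<in> ks \<beta> \<and> i \<notin> V" using that by (auto simp: Bset_def)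
    then show ?thesis unfolding ch_def by (rule someI_ex)
  qed
  define X where "X = ch ` Bset"
  have finB: "finite Bset" by (simp add: Bset_def)
  have cardX: "card X + 1 \<le> M j"
  proof -
    have "card X \<le> card Bset" unfolding X_def by (rule card_image_le[OF finB])
    moreover have "Bset \<subseteq> {\<beta>\<in>ks p. j \<in> ks \<beta>} - {\<alpha>}" by (auto simp: Bset_def V_def)
    then have "card Bset \<le> card ({\<beta>\<in>ks p. j \<in> ks \<beta>} - {\<alpha>})" by (intro card_mono) auto
    moreover have "card ({\<beta>\<in>ks p. j \<in> ks \<beta>} - {\<alpha>}) = M j - 1"
      using \<alpha>p jV by (simp add: M_def V_def)
    moreover have "M j \<ge> 1"
    proof -
      have "{\<beta>\<in>ks p. j \<in> ks \<beta>} \<noteq> {}" using \<alpha>p jV by (auto simp: V_def)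
      then show ?thesis unfolding M_def by (simp add: Suc_leI card_gt_0_iff)
    qed
    ultimately show ?thesis by linarith
  qed
  define Z where "Z = {..<n} - (V \<union> X)"
  have finX: "finite X" by (simp add: X_def finB)
  have cardZ: "n \<le> card Z + card V + card X"
  proof -
    have "card {..<n} - card (V \<union> X) \<le> card Z" unfolding Z_def
      by (rule diff_card_le_card_Diff) (simp add: finV finX)
    moreover have "card (V \<union> X) \<le> card V + card X" by (rule card_Un_le)
    ultimately show ?thesis by simp
  qed
  have Zp: "\<forall>\<beta>\<in>ks p. 0 < lk \<beta> j \<longrightarrow> ks \<beta> \<subseteq> V \<union> {a, b} \<longrightarrow> ks \<beta> \<subseteq> V" if "a \<in> Z" "b \<in> Z" for a b
  proof (intro ballI impI)
    fix \<beta> assume b: "\<beta> \<in> ks p" "0 < lk \<beta> j" "ks \<beta> \<subseteq> V \<union> {a, b}"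
    show "ks \<beta> \<subseteq> V"
    proof (rule ccontr)
      assume "\<not> ks \<beta> \<subseteq> V"
      then have "\<beta> \<in> Bset" using b by (auto simp: Bset_def in_keys_iff)
      then have "ch \<beta> \<in> ks \<beta>" "ch \<beta> \<notin> V" "ch \<beta> \<in> X" using chp by (auto simp: X_def)
      then show False using b(3) that by (auto simp: Z_def)
    qed
  qed
  define Kset where "Kset = (\<lambda>\<beta>. lk \<beta> j) ` {\<beta>\<in>ks p. ks \<beta> \<subseteq> V}"
  define K where "K = Max Kset"
  have finK: "finite Kset" by (simp add: Kset_def)
  have \<alpha>K: "lk \<alpha> j \<in> Kset" using \<alpha>p by (auto simp: Kset_def V_def)
  have Kin: "K \<in> Kset" unfolding K_def using finK \<alpha>K by (intro Max_in) auto
  have Kex: "\<exists>\<beta>\<in>ks p. ks \<beta> \<subseteq> V \<and> lk \<beta> j = K" using Kin by (auto simp: Kset_def)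
  have Kmax: "\<forall>\<beta>\<in>ks p. ks \<beta> \<subseteq> V \<longrightarrow> lk \<beta> j \<le> K"
    unfolding K_def using finK by (auto simp: Kset_def intro!: Max_ge)
  have K2: "2 \<le> K" using \<alpha>j Max_ge[OF finK \<alpha>K] by (simp add: K_def)
  define PZ where "PZ = {P. P \<subseteq> Z \<and> card P = 2}"
  have exP: "\<exists>\<beta>\<in>ks p. lk \<beta> j = 0 \<and> ks \<beta> - V = P" if PP: "P \<in> PZ" for P
  proof -
    have "card P = 2" using PP by (simp add: PZ_def)
    then obtain a b where P: "P = {a, b}" "a \<noteq> b" by (auto simp: card_2_iff)
    have ab: "a \<in> Z" "b \<in> Z" using PP P by (auto simp: PZ_def)
    then have "a < n" "b < n" "a \<notin> V" "b \<notin> V" by (auto simp: Z_def)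
    from pair_lemma[OF pH Vn jV this P(2) Zp[OF ab] K2 Kex Kmax]
    obtain \<beta> where b: "\<beta> \<in> ks p" "ks \<beta> \<subseteq> V \<union> {a, b}" "lk \<beta> j = 0" "lk \<beta> a = K - 1" "lk \<beta> b = 1"
      by blast
    have "a \<in> ks \<beta>" "b \<in> ks \<beta>" using b K2 by (auto simp: in_keys_iff)
    then have "ks \<beta> - V = P" using b(2) P \<open>a \<notin> V\<close> \<open>b \<notin> V\<close> by auto
    then show ?thesis using b by blast
  qed
  define f where "f P = (SOME \<beta>. \<beta> \<in> ks p \<and> lk \<beta> j = 0 \<and> ks \<beta> - V = P)" for P
  have fP: "f P \<in> ks p \<and> lk (f P) j = 0 \<and> ks (f P) - V = P" if "P \<in> PZ" for P
    unfolding f_def using exP[OF that] by (rule someI_ex[where P = "\<lambda>\<beta>. \<beta> \<in> ks p \<and> lk \<beta> j = 0 \<and> ks \<beta> - V = P", OF bexE]) blast+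
  have injf: "inj_on f PZ"
    by (rule inj_onI) (metis fP)
  have fsub: "f ` PZ \<subseteq> ks p - {\<alpha>}" using fP \<alpha>j by fastforce
  have finZ: "finite Z" by (simp add: Z_def)
  have "card PZ = card Z choose 2" unfolding PZ_def using n_subsets[OF finZ] by simp
  moreover have "card PZ \<le> card (ks p - {\<alpha>})"
    using card_inj_on_le[OF injf fsub] by simp
  moreover have "card (ks p - {\<alpha>}) = N p - 1" using \<alpha>p by (simp add: N_def)
  moreover have "N p \<ge> 1"
  proof -
    have "card (ks p) > 0" using \<alpha>p card_gt_0_iff by fastforce
    then show ?thesis by (simp add: N_def)
  qed
  ultimately have zc: "(card Z choose 2) + 1 \<le> N p" by linarith
  show False
    by (rule arith_c2[OF nbig d2 nM Nsmall cardV cardX _ zc n1]) (use cardZ in linarith)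
qed


theorem theorem2:
  fixes n d :: nat and p :: mpoly
  assumes "n \<ge> 1" and "n \<ge> 2 * d ^ 2 + 2 * d" and "p \<in> H n d"
  shows "N p \<ge> (n - 1) * d + 1 \<and> (N p = (n - 1) * d + 1 \<longrightarrow> p \<in> W n)"
proof (cases "\<exists>j<n. \<forall>\<beta>\<in>Poly_Mapping.keys p. Poly_Mapping.lookup \<beta> j \<le> 1")
  case True
  then obtain j where jn: "j < n" and lin: "\<forall>\<beta>\<in>ks p. lk \<beta> j \<le> 1" by blast
  obtain A where A: "nonneg_coeffs A" "p - 1 = (svar n - 1) * A" "\<forall>\<gamma>\<in>ks A. mon_deg \<gamma> + 1 \<le> d"
    using factor1[OF assms(3) jn lin] by blast
  have "(n - 1) * d + 1 \<le> N p" by (rule count_from_A[OF assms(3) assms(1) A])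
  moreover have "p \<in> W n"
    by (rule W_from_A[OF H_facts(2)[OF assms(3)] A])
  ultimately show ?thesis by simp
next
  case False
  then have "\<forall>j<n. \<exists>\<beta>\<in>ks p. 2 \<le> lk \<beta> j" by (auto simp: not_le numeral_2_eq_2 Suc_le_eq)
  then have "(n - 1) * d + 2 \<le> N p" by (rule case2[OF assms(3) assms(1) assms(2)])
  then show ?thesis by simp
qed

end
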